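(* Let $\beta\in\mathbb{R}$, $b>0$, and let $\Omega\subset\mathbb{R}^{+}$ be measurable. Suppose there is a constant $C$ such that for every $f\in L^2(\mathbb{R}^{+})$ with $\operatorname{supp}f\subset[0,b]$, $\|\Phi_\beta^{*}f\|_{L^2(\mathbb{R}^{+})}\le C\|\Phi_\beta^{*}f\|_{L^2(\Omega)}$. Then $\Omega$ is thick.
   Context: With $\psi_\beta(x,k)=\frac{1}{2i}\frac{\beta+ik}{\beta-ik}e^{ikx}-\frac{1}{2i}e^{-ikx}$, define $(\Phi_\beta^{*}g)(x)=\sqrt{2/\pi}\int_0^\infty\overline{\psi_\beta(x,k)}g(k)dk$ for $g\in L^2(\mathbb{R}^{+})$ (for $g$ compactly supported this integral converges absolutely). A measurable $E\subset\mathbb{R}^{+}$ is thick if there exist $\gamma>0$, $L>0$ with $|E\cap[x,x+L]|\ge\gamma L$ for all $x\in\mathbb{R}^{+}$. *)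

theory Defs
  imports "HOL-Analysis.Analysis"
begin

definition psi :: "real \<Rightarrow> real \<Rightarrow> real \<Rightarrow> complex" where
  "psi \<beta> x k =
     (1 / (2 * \<i>)) * ((complex_of_real \<beta> + \<i> * complex_of_real k) /
                       (complex_of_real \<beta> - \<i> * complex_of_real k)) * exp (\<i> * complex_of_real (k * x))
     - (1 / (2 * \<i>)) * exp (- (\<i> * complex_of_real (k * x)))"

definition Phi_adj :: "real \<Rightarrow> (real \<Rightarrow> complex) \<Rightarrow> real \<Rightarrow> complex" where
  "Phi_adj \<beta> g x =
     complex_of_real (sqrt (2 / pi)) * (LINT k:{0..}|lebesgue. cnj (psi \<beta> x k) * g k)"

definition L2_sq :: "real set \<Rightarrow> (real \<Rightarrow> complex) \<Rightarrow> ennreal" where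
  "L2_sq A h = (\<integral>\<^sup>+ x\<in>A. ennreal ((cmod (h x))\<^sup>2) \<partial>lebesgue)"

definition thick :: "real set \<Rightarrow> bool" where
  "thick E \<longleftrightarrow> (\<exists>\<gamma>>0. \<exists>L>0. \<forall>x\<ge>0. measure lebesgue (E \<inter> {x..x+L}) \<ge> \<gamma> * L)"

end

theory Submission
  imports Defs
begin


lemma exp_i_minus_one_le: "cmod (exp (\<i> * of_real t) - 1) \<le> \<bar>t\<bar>"
proof -
  have e: "exp (\<i> * of_real t) = Complex (cos t) (sin t)"
    by (simp add: exp_eq_polar cis.ctr)
  have "(cmod (exp (\<i> * of_real t) - 1))\<^sup>2 = (cos t - 1)\<^sup>2 + (sin t)\<^sup>2"
    by (simp add: e cmod_def)
  also have "\<dots> = 2 - 2 * cos t" by (simp add: power2_eq_square algebra_simps)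
  also have "\<dots> = 4 * (sin (t/2))\<^sup>2" using cos_double_sin[of "t/2"] by simp
  also have "\<dots> \<le> t\<^sup>2"
  proof -
    have "\<bar>sin (t/2)\<bar> \<le> \<bar>t/2\<bar>" by (rule abs_sin_x_le_abs_x)
    then have "(sin (t/2))\<^sup>2 \<le> (t/2)\<^sup>2" by (metis abs_le_square_iff)
    then show ?thesis by (simp add: power_divide)
  qed
  finally show ?thesis by (metis abs_ge_zero norm_ge_zero power2_le_imp_le power2_abs)
qed




definition J :: "real \<Rightarrow> real \<Rightarrow> complex \<Rightarrow> real \<Rightarrow> complex" where
  "J b \<beta> a s = integral {0..b} (\<lambda>k. (of_real \<beta> + a * of_real k) * exp (\<i> * of_real (k * s)))"

lemma J_integrable: "(\<lambda>k. (of_real \<beta> + a * of_real k) * exp (\<i> * of_real (k * s))) integrable_on {0..b}"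
  by (intro integrable_continuous_interval continuous_intros)

lemma J_has_integral: "((\<lambda>k. (of_real \<beta> + a * of_real k) * exp (\<i> * of_real (k * s))) has_integral J b \<beta> a s) {0..b}"
  unfolding J_def using J_integrable by (rule integrable_integral)

lemma vd_of_field:
  "(f has_field_derivative f') (at (of_real x)) \<Longrightarrow> g = (\<lambda>x. f (of_real x)) \<Longrightarrow> (g has_vector_derivative f') (at x within S)"
  using has_vector_derivative_real_field by blast

lemma coef_bound:
  assumes "cmod a \<le> 1" "0 \<le> k" "k \<le> b"
  shows "cmod (of_real \<beta> + a * of_real k) \<le> \<bar>\<beta>\<bar> + b"
proof -
  have "cmod (of_real \<beta> + a * of_real k) \<le> \<bar>\<beta>\<bar> + cmod a * \<bar>k\<bar>"
    by (metis norm_mult norm_of_real norm_triangle_ineq)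
  also have "cmod a * \<bar>k\<bar> \<le> 1 * b" using assms by (intro mult_mono) auto
  finally show ?thesis by simp
qed

lemma vd_of_field':
  "(f has_field_derivative f') (at (of_real x)) \<Longrightarrow> g = (\<lambda>x. f (of_real x)) \<Longrightarrow> f' = h \<Longrightarrow> (g has_vector_derivative h) (at x within S)"
  using has_vector_derivative_real_field by blast

lemma J_bound:
  assumes "b \<ge> 0" "cmod a \<le> 1"
  shows "cmod (J b \<beta> a s) \<le> b * (\<bar>\<beta>\<bar> + b)"
proof -
  have "\<And>k. k \<in> {0..b} - {} \<Longrightarrow> cmod ((of_real \<beta> + a * of_real k) * exp (\<i> * of_real (k * s))) \<le> \<bar>\<beta>\<bar> + b"
  proof -
    fix k assume k: "k \<in> {0..b} - {}"
    have "cmod (of_real \<beta> + a * of_real k) \<le> \<bar>\<beta>\<bar> + b"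
      using k assms by (intro coef_bound) auto
    then show "cmod ((of_real \<beta> + a * of_real k) * exp (\<i> * of_real (k * s))) \<le> \<bar>\<beta>\<bar> + b"
      by (simp add: norm_mult)
  qed
  from has_integral_bound_real[OF _ finite.emptyI J_has_integral[where b=b and \<beta>=\<beta> and a=a and s=s] this]
  show ?thesis using assms by (simp add: mult.commute)
qed

lemma J_zero:
  assumes "b \<ge> 0"
  shows "J b \<beta> a 0 = of_real (\<beta> * b) + a * of_real (b\<^sup>2 / 2)"
proof -
  have "((\<lambda>k. (of_real \<beta> + a * of_real k)) has_integral
      ((\<lambda>k. of_real (\<beta> * k) + a * of_real (k\<^sup>2 / 2)) b - (\<lambda>k. of_real (\<beta> * k) + a * of_real (k\<^sup>2 / 2)) 0)) {0..b}"
    apply (rule fundamental_theorem_of_calculus[OF assms])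
    apply (rule vd_of_field[where f="\<lambda>z. of_real \<beta> * z + a * (z^2/2)"])
    apply (auto intro!: derivative_eq_intros)
    done
  then have "((\<lambda>k. (of_real \<beta> + a * of_real k) * exp (\<i> * of_real (k * 0))) has_integral
      (of_real (\<beta> * b) + a * of_real (b\<^sup>2 / 2))) {0..b}" by simp
  then show ?thesis using J_has_integral by (metis has_integral_unique)
qed

lemma J_lip:
  assumes "b \<ge> 0" "cmod a \<le> 1"
  shows "cmod (J b \<beta> a s - J b \<beta> a 0) \<le> (b * \<bar>s\<bar> * (\<bar>\<beta>\<bar> + b)) * b"
proof -
  have hi: "((\<lambda>k. (of_real \<beta> + a * of_real k) * exp (\<i> * of_real (k * s)) - (of_real \<beta> + a * of_real k) * exp (\<i> * of_real (k * 0)))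
     has_integral (J b \<beta> a s - J b \<beta> a 0)) {0..b}"
    by (intro has_integral_diff J_has_integral)
  have "\<And>k. k \<in> {0..b} - {} \<Longrightarrow> cmod ((of_real \<beta> + a * of_real k) * exp (\<i> * of_real (k * s)) - (of_real \<beta> + a * of_real k) * exp (\<i> * of_real (k * 0))) \<le> b * \<bar>s\<bar> * (\<bar>\<beta>\<bar> + b)"
  proof -
    fix k assume k: "k \<in> {0..b} - {}"
    have "cmod (of_real \<beta> + a * of_real k) \<le> \<bar>\<beta>\<bar> + b"
      using k assms by (intro coef_bound) auto
    then have n1: "cmod (of_real \<beta> + a * of_real k) \<le> \<bar>\<beta>\<bar> + b" .
    have n2: "cmod (exp (\<i> * of_real (k * s)) - 1) \<le> b * \<bar>s\<bar>"
    proof -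
      have "\<bar>k * s\<bar> \<le> b * \<bar>s\<bar>" using k by (simp add: abs_mult mult_right_mono)
      then show ?thesis using exp_i_minus_one_le[of "k * s"] by linarith
    qed
    have "cmod ((of_real \<beta> + a * of_real k) * exp (\<i> * of_real (k * s)) - (of_real \<beta> + a * of_real k) * exp (\<i> * of_real (k * 0)))
       = cmod (of_real \<beta> + a * of_real k) * cmod (exp (\<i> * of_real (k * s)) - 1)"
      by (simp add: norm_mult[symmetric] algebra_simps)
    also have "\<dots> \<le> (\<bar>\<beta>\<bar> + b) * (b * \<bar>s\<bar>)"
      using assms by (intro mult_mono n1 n2) auto
    finally show "cmod ((of_real \<beta> + a * of_real k) * exp (\<i> * of_real (k * s)) - (of_real \<beta> + a * of_real k) * exp (\<i> * of_real (k * 0))) \<le> b * \<bar>s\<bar> * (\<bar>\<beta>\<bar> + b)"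
      by (simp add: mult_ac)
  qed
  from has_integral_bound_real[OF _ finite.emptyI hi this]
  show ?thesis using assms by simp
qed




lemma J_decay:
  assumes "b \<ge> 0" "cmod a \<le> 1" "\<bar>s\<bar> \<ge> 1"
  shows "cmod (J b \<beta> a s) \<le> (2 * \<bar>\<beta>\<bar> + b + 2) / \<bar>s\<bar>"
proof -
  have s0: "s \<noteq> 0" using assms by auto
  define G where "G = (\<lambda>z::complex. (of_real \<beta> + a * z) * exp (\<i> * z * of_real s) / (\<i> * of_real s)
       + a * exp (\<i> * z * of_real s) / (of_real s)\<^sup>2)"
  have D: "(G has_field_derivative ((of_real \<beta> + a * z) * exp (\<i> * z * of_real s))) (at z)" for z
  proof -
    show ?thesis
      unfolding G_def
      using s0 by (auto intro!: derivative_eq_intros simp: field_simps power2_eq_square)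
  qed
  have "((\<lambda>k. (of_real \<beta> + a * of_real k) * exp (\<i> * of_real (k * s))) has_integral
      (G (of_real b) - G (of_real 0))) {0..b}"
    using fundamental_theorem_of_calculus[OF assms(1), where f="\<lambda>k. G (of_real k)"
       and f'="\<lambda>k. (of_real \<beta> + a * of_real k) * exp (\<i> * of_real (k * s))"]
    using vd_of_field'[OF D] by (simp add: mult.assoc)
  then have eq: "J b \<beta> a s = G (of_real b) - G 0" using J_has_integral by (metis has_integral_unique of_real_0)
  have n1: "cmod (of_real \<beta> + a * of_real b) \<le> \<bar>\<beta>\<bar> + b"
    using assms by (intro coef_bound) auto
  have e1: "cmod (exp (\<i> * of_real b * of_real s)) = 1"
    by (metis norm_exp_i_times of_real_mult mult.assoc)
  have ss: "\<bar>s\<bar>\<^sup>2 \<ge> \<bar>s\<bar>"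
  proof -
    have "\<bar>s\<bar> * 1 \<le> \<bar>s\<bar> * \<bar>s\<bar>" using assms by (intro mult_left_mono) auto
    then show ?thesis by (simp add: power2_eq_square)
  qed
  have "cmod (G (of_real b)) \<le> (\<bar>\<beta>\<bar> + b) / \<bar>s\<bar> + 1 / \<bar>s\<bar>"
  proof -
    have "cmod (G (of_real b)) \<le> cmod ((of_real \<beta> + a * of_real b) * exp (\<i> * of_real b * of_real s) / (\<i> * of_real s))
       + cmod (a * exp (\<i> * of_real b * of_real s) / (of_real s)\<^sup>2)"
      unfolding G_def by (rule norm_triangle_ineq)
    also have "\<dots> = cmod (of_real \<beta> + a * of_real b) / \<bar>s\<bar> + cmod a / \<bar>s\<bar>\<^sup>2"
      by (simp add: norm_mult norm_divide e1 norm_power)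
    also have "\<dots> \<le> (\<bar>\<beta>\<bar> + b) / \<bar>s\<bar> + 1 / \<bar>s\<bar>"
    proof (intro add_mono divide_right_mono n1)
      show "cmod a / \<bar>s\<bar>\<^sup>2 \<le> 1 / \<bar>s\<bar>"
        by (rule frac_le) (use assms ss in auto)
    qed simp
    finally show ?thesis .
  qed
  moreover have "cmod (G 0) \<le> \<bar>\<beta>\<bar> / \<bar>s\<bar> + 1 / \<bar>s\<bar>"
  proof -
    have "cmod (G 0) \<le> cmod (of_real \<beta> / (\<i> * of_real s)) + cmod (a / (of_real s)\<^sup>2)"
      unfolding G_def by simp (rule norm_triangle_ineq)
    also have "\<dots> = \<bar>\<beta>\<bar> / \<bar>s\<bar> + cmod a / \<bar>s\<bar>\<^sup>2"
      by (simp add: norm_mult norm_divide norm_power)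
    also have "\<dots> \<le> \<bar>\<beta>\<bar> / \<bar>s\<bar> + 1 / \<bar>s\<bar>"
      using assms ss by (intro add_left_mono frac_le) auto
    finally show ?thesis .
  qed
  ultimately have "cmod (J b \<beta> a s) \<le> (\<bar>\<beta>\<bar> + b) / \<bar>s\<bar> + 1 / \<bar>s\<bar> + (\<bar>\<beta>\<bar> / \<bar>s\<bar> + 1 / \<bar>s\<bar>)"
    unfolding eq by (rule order_trans[OF norm_triangle_ineq4 add_mono])
  also have "\<dots> = (2 * \<bar>\<beta>\<bar> + b + 2) / \<bar>s\<bar>" by (simp only: add_divide_distrib[symmetric]) (simp add: algebra_simps)
  finally show ?thesis .
qed




lemma cnj_psi:
  "cnj (psi \<beta> x k) = (\<i>/2) * ((of_real \<beta> - \<i> * of_real k) / (of_real \<beta> + \<i> * of_real k)) * exp (- (\<i> * of_real (k * x)))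
      - (\<i>/2) * exp (\<i> * of_real (k * x))"
proof -
  have h: "1 / (2 * \<i>) = - \<i> / 2" by (simp add: field_simps)
  have c1: "cnj (exp (\<i> * of_real (k * x))) = exp (- (\<i> * of_real (k * x)))"
    by (simp add: exp_cnj)
  have c2: "cnj (exp (- (\<i> * of_real (k * x)))) = exp (\<i> * of_real (k * x))"
    by (simp add: exp_cnj)
  have c3: "cnj ((of_real \<beta> + \<i> * of_real k) / (of_real \<beta> - \<i> * of_real k))
      = (of_real \<beta> - \<i> * of_real k) / (of_real \<beta> + \<i> * of_real k)"
    by (simp add: complex_cnj_divide)
  have c4: "cnj (- \<i> / 2) = \<i> / 2" by (simp add: complex_eq_iff)
  show ?thesis
    unfolding psi_def h complex_cnj_diff complex_cnj_mult c1 c2 c3 c4 ..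
qed

lemma cnj_psi_mult:
  "cnj (psi \<beta> x k) * ((of_real \<beta> + \<i> * of_real k) * exp (\<i> * of_real (k * x0)))
   = (\<i>/2) * ((of_real \<beta> + (-\<i>) * of_real k) * exp (\<i> * of_real (k * (x0 - x)))
       - (of_real \<beta> + \<i> * of_real k) * exp (\<i> * of_real (k * (x + x0))))"
proof -
  have e1: "exp (- (\<i> * of_real (k * x))) * exp (\<i> * of_real (k * x0)) = exp (\<i> * of_real (k * (x0 - x)))"
    unfolding mult_exp_exp by (simp add: algebra_simps)
  have e2: "exp (\<i> * of_real (k * x)) * exp (\<i> * of_real (k * x0)) = exp (\<i> * of_real (k * (x + x0)))"
    unfolding mult_exp_exp by (simp add: algebra_simps)
  have r: "((of_real \<beta> - \<i> * of_real k) / (of_real \<beta> + \<i> * of_real k)) * (of_real \<beta> + \<i> * of_real k)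
      = of_real \<beta> - \<i> * of_real k"
  proof (cases "of_real \<beta> + \<i> * of_real k = (0::complex)")
    case True
    then have "\<beta> = 0 \<and> k = 0" by (simp add: complex_eq_iff)
    then show ?thesis by simp
  next
    case False then show ?thesis by simp
  qed
  have "cnj (psi \<beta> x k) * ((of_real \<beta> + \<i> * of_real k) * exp (\<i> * of_real (k * x0)))
     = (\<i>/2) * (((of_real \<beta> - \<i> * of_real k) / (of_real \<beta> + \<i> * of_real k)) * (of_real \<beta> + \<i> * of_real k))
         * (exp (- (\<i> * of_real (k * x))) * exp (\<i> * of_real (k * x0)))
       - (\<i>/2) * (of_real \<beta> + \<i> * of_real k) * (exp (\<i> * of_real (k * x)) * exp (\<i> * of_real (k * x0)))"
    unfolding cnj_psi by (simp add: algebra_simps)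
  also have "\<dots> = (\<i>/2) * ((of_real \<beta> + (-\<i>) * of_real k) * exp (\<i> * of_real (k * (x0 - x)))
       - (of_real \<beta> + \<i> * of_real k) * exp (\<i> * of_real (k * (x + x0))))"
    unfolding r e1 e2 by (simp add: algebra_simps)
  finally show ?thesis .
qed

lemma Phi_formula:
  assumes b: "b \<ge> 0"
  shows "Phi_adj \<beta> (\<lambda>k. indicator {0..b} k *\<^sub>R ((of_real \<beta> + \<i> * of_real k) * exp (\<i> * of_real (k * x0)))) x
    = of_real (sqrt (2/pi)) * ((\<i>/2) * (J b \<beta> (-\<i>) (x0 - x) - J b \<beta> \<i> (x + x0)))"
proof -
  define h where "h k = (\<i>/2) * ((of_real \<beta> + (-\<i>) * of_real k) * exp (\<i> * of_real (k * (x0 - x)))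
       - (of_real \<beta> + \<i> * of_real k) * exp (\<i> * of_real (k * (x + x0))))" for k
  have eqf: "(\<lambda>k. indicator {0..} k *\<^sub>R (cnj (psi \<beta> x k) * (indicator {0..b} k *\<^sub>R ((of_real \<beta> + \<i> * of_real k) * exp (\<i> * of_real (k * x0))))))
      = (\<lambda>k. indicator {0..b} k *\<^sub>R h k)"
  proof (rule ext)
    fix k
    show "indicator {0..} k *\<^sub>R (cnj (psi \<beta> x k) * (indicator {0..b} k *\<^sub>R ((of_real \<beta> + \<i> * of_real k) * exp (\<i> * of_real (k * x0)))))
      = indicator {0..b} k *\<^sub>R h k"
    proof (cases "k \<in> {0..b}")
      case True
      then have i1: "indicator {0..} k = (1::real)" "indicator {0..b} k = (1::real)"
        by (auto simp: indicator_def)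
      show ?thesis unfolding i1 scaleR_one h_def cnj_psi_mult ..
    next
      case False
      then have i2: "indicator {0..b} k = (0::real)" by (auto simp: indicator_def)
      show ?thesis unfolding i2 by simp
    qed
  qed
  have hc: "continuous_on {0..b} h" unfolding h_def by (intro continuous_intros)
  have si: "set_integrable lebesgue {0..b} h"
  proof -
    have "set_integrable lborel {0..b} h" by (rule borel_integrable_atLeastAtMost'[OF hc])
    then show ?thesis unfolding set_integrable_def
      by (subst integrable_completion) (auto intro: borel_measurable_integrable)
  qed
  have "(LINT k:{0..}|lebesgue. cnj (psi \<beta> x k) * (indicator {0..b} k *\<^sub>R ((of_real \<beta> + \<i> * of_real k) * exp (\<i> * of_real (k * x0)))))
      = (LINT k:{0..b}|lebesgue. h k)"
    unfolding set_lebesgue_integral_def eqf ..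
  also have "\<dots> = integral {0..b} h" by (rule set_lebesgue_integral_eq_integral(2)[OF si])
  also have "\<dots> = (\<i>/2) * (J b \<beta> (-\<i>) (x0 - x) - J b \<beta> \<i> (x + x0))"
    unfolding h_def J_def integral_mult_right
    by (subst integral_diff[OF J_integrable J_integrable]) (rule refl)
  finally show ?thesis unfolding Phi_adj_def by simp
qed




lemma emeasure_lebesgue_Icc: "a \<le> b \<Longrightarrow> emeasure lebesgue {a..b::real} = ennreal (b - a)"
  by simp

lemma meas_leb: "f \<in> borel_measurable borel \<Longrightarrow> f \<in> borel_measurable (lebesgue :: 'a::euclidean_space measure)"
  by (rule measurable_completion) simp

lemma meas_test: "(\<lambda>x::real. ennreal (A / (x - x0)\<^sup>2) * indicator {x0+R..} x) \<in> borel_measurable lebesgue"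
  by (rule meas_leb) measurable

lemma tail_right:
  fixes A R x0 :: real
  assumes "A \<ge> 0" "R > 0"
  shows "(\<integral>\<^sup>+x. ennreal (A / (x - x0)\<^sup>2) * indicator {x0+R..} x \<partial>lebesgue) = ennreal (A / R)"
proof -
  have "(\<integral>\<^sup>+x. ennreal (A / (x - x0)\<^sup>2) * indicator {x0+R..} x \<partial>lebesgue)
      = (\<integral>\<^sup>+x. ennreal (A / (x - x0)\<^sup>2) * indicator {x0+R..} x \<partial>lborel)"
    by (rule nn_integral_completion)
  also have "\<dots> = 0 - (- A / ((x0 + R) - x0))"
  proof (rule nn_integral_FTC_atLeast)
    show "(\<lambda>x. A / (x - x0)\<^sup>2) \<in> borel_measurable borel" by measurable
    fix x assume x: "x0 + R \<le> x"
    then have "x - x0 \<noteq> 0" using assms by auto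
    then show "((\<lambda>x. - A / (x - x0)) has_real_derivative A / (x - x0)\<^sup>2) (at x)"
      by (auto intro!: derivative_eq_intros simp: field_simps power2_eq_square)
    show "0 \<le> A / (x - x0)\<^sup>2" using assms by simp
  next
    have "filterlim (\<lambda>x::real. (- x0) + x) at_top at_top"
      by (rule filterlim_tendsto_add_at_top[OF tendsto_const filterlim_ident])
    then have "filterlim (\<lambda>x::real. x - x0) at_top at_top" by simp
    then have "((\<lambda>x. inverse (x - x0)) \<longlongrightarrow> 0) at_top"
      by (rule tendsto_inverse_0_at_top)
    then have "((\<lambda>x. - A * inverse (x - x0)) \<longlongrightarrow> - A * 0) at_top"
      by (intro tendsto_mult tendsto_const)
    then show "((\<lambda>x. - A / (x - x0)) \<longlongrightarrow> 0) at_top"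
      by (simp add: divide_inverse)
  qed
  also have "\<dots> = A / R" by simp
  finally show ?thesis .
qed

lemma tail_left:
  fixes A R x0 :: real
  assumes "A \<ge> 0" "R > 0" "x0 \<ge> R"
  shows "(\<integral>\<^sup>+x. ennreal (A / (x - x0)\<^sup>2) * indicator {0..x0-R} x \<partial>lebesgue) \<le> ennreal (A / R)"
proof -
  have "(\<integral>\<^sup>+x. ennreal (A / (x - x0)\<^sup>2) * indicator {0..x0-R} x \<partial>lebesgue)
      = (\<integral>\<^sup>+x. ennreal (A / (x - x0)\<^sup>2) * indicator {0..x0-R} x \<partial>lborel)"
    by (rule nn_integral_completion)
  also have "\<dots> = ennreal (A / (x0 - (x0 - R)) - A / (x0 - 0))"
  proof (rule nn_integral_has_integral_lebesgue')
    show "0 \<le> A / (x - x0)\<^sup>2" for x using assms by simp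
    show "((\<lambda>x. A / (x - x0)\<^sup>2) has_integral A / (x0 - (x0 - R)) - A / (x0 - 0)) {0..x0 - R}"
    proof (rule fundamental_theorem_of_calculus[where f="\<lambda>x. A / (x0 - x)"])
      show "0 \<le> x0 - R" using assms by simp
      fix x assume "x \<in> {0..x0 - R}"
      then have "x0 - x \<noteq> 0" using assms by auto
      then have "((\<lambda>x. A / (x0 - x)) has_real_derivative A / (x - x0)\<^sup>2) (at x)"
        by (auto intro!: derivative_eq_intros simp: field_simps power2_eq_square)
      then show "((\<lambda>x. A / (x0 - x)) has_vector_derivative A / (x - x0)\<^sup>2) (at x within {0..x0 - R})"
        by (simp add: has_real_derivative_iff_has_vector_derivative has_vector_derivative_at_within)
    qed
  qed
  also have "\<dots> \<le> ennreal (A / R)"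
    using assms by (intro ennreal_leI) simp
  finally show ?thesis .
qed



theorem lemma3p4:
  fixes \<beta> b :: real and \<Omega> :: "real set"
  assumes "b > 0"
    and "\<Omega> \<in> sets lebesgue" and "\<Omega> \<subseteq> {0..}"
    and "\<exists>C::real. \<forall>f :: real \<Rightarrow> complex.
           f \<in> borel_measurable lebesgue \<longrightarrow>
           L2_sq {0..} f < \<infinity> \<longrightarrow>
           (\<forall>k. k \<notin> {0..b} \<longrightarrow> f k = 0) \<longrightarrow>
           L2_sq {0..} (Phi_adj \<beta> f) \<le> ennreal (C\<^sup>2) * L2_sq \<Omega> (Phi_adj \<beta> f)"
  shows "thick \<Omega>"
proof (rule ccontr)
  assume nt: "\<not> thick \<Omega>"
  have b0: "b > 0" by fact
  from assms(4) obtain C :: real where hC: "\<forall>f :: real \<Rightarrow> complex.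
           f \<in> borel_measurable lebesgue \<longrightarrow>
           L2_sq {0..} f < \<infinity> \<longrightarrow>
           (\<forall>k. k \<notin> {0..b} \<longrightarrow> f k = 0) \<longrightarrow>
           L2_sq {0..} (Phi_adj \<beta> f) \<le> ennreal (C\<^sup>2) * L2_sq \<Omega> (Phi_adj \<beta> f)" by blast
  define bb where "bb = \<bar>\<beta>\<bar> + b"
  define M where "M = b * bb"
  define K where "K = 2 * \<bar>\<beta>\<bar> + b + 2"
  define \<delta> where "\<delta> = min 1 (1 / (4 * bb))"
  define \<Lambda> where "\<Lambda> = (b\<^sup>2 / 8)\<^sup>2 * (2 * \<delta>)"
  define R where "R = max 1 (max (8 * K / b\<^sup>2) (32 * C\<^sup>2 * K\<^sup>2 / \<Lambda> + 1))"
  define Q where "Q = 8 * C\<^sup>2 * M\<^sup>2 * R"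
  define \<gamma> where "\<gamma> = \<Lambda> / (4 * (Q + 1))"
  have bb0: "bb > 0" unfolding bb_def using b0 by simp
  have K2: "K \<ge> 2" unfolding K_def using b0 by simp
  have M0: "M \<ge> 0" unfolding M_def using b0 bb0 by simp
  have d0: "\<delta> > 0" unfolding \<delta>_def using bb0 by simp
  have d1: "\<delta> \<le> 1" unfolding \<delta>_def by simp
  have dbb: "\<delta> * bb \<le> 1 / 4"
  proof -
    have "\<delta> * bb \<le> (1 / (4 * bb)) * bb" unfolding \<delta>_def using bb0 by (intro mult_right_mono) auto
    also have "\<dots> = 1 / 4" using bb0 by simp
    finally show ?thesis .
  qed
  have L0: "\<Lambda> > 0" unfolding \<Lambda>_def using b0 d0 by simp
  have R1: "R \<ge> 1" unfolding R_def by simp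
  have R0: "R > 0" using R1 by simp
  have RK: "8 * K / b\<^sup>2 \<le> R" unfolding R_def by simp
  have RL: "32 * C\<^sup>2 * K\<^sup>2 / \<Lambda> \<le> R" unfolding R_def by simp
  have Q0: "Q \<ge> 0" unfolding Q_def using R0 by simp
  have g0: "\<gamma> > 0"
  proof -
    have "4 * (Q + 1) > 0" using Q0 by simp
    then show ?thesis unfolding \<gamma>_def by (rule divide_pos_pos[OF L0])
  qed
  from nt have "\<forall>g>0. \<forall>L>0. \<exists>x\<ge>0. measure lebesgue (\<Omega> \<inter> {x..x+L}) < g * L"
    unfolding thick_def by (auto simp: not_le)
  then obtain x1 where x1: "x1 \<ge> 0" "measure lebesgue (\<Omega> \<inter> {x1..x1 + 2 * R}) < \<gamma> * (2 * R)"
    using g0 R0 by (meson mult_pos_pos zero_less_numeral)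
  define x0 where "x0 = x1 + R"
  have x0R: "x0 \<ge> R" unfolding x0_def using x1 by simp
  define f where "f = (\<lambda>k. indicator {0..b} k *\<^sub>R ((of_real \<beta> + \<i> * of_real k) * exp (\<i> * of_real (k * x0))) :: complex)"
  define D where "D x = J b \<beta> (-\<i>) (x0 - x) - J b \<beta> \<i> (x + x0)" for x
  define c2 where "c2 = 1 / (2 * pi)"
  have c20: "c2 > 0" unfolding c2_def by simp
  have Phi: "(cmod (Phi_adj \<beta> f x))\<^sup>2 = c2 * (cmod (D x))\<^sup>2" for x
  proof -
    have e: "Phi_adj \<beta> f x = of_real (sqrt (2/pi)) * ((\<i>/2) * D x)"
      unfolding f_def D_def by (rule Phi_formula) (use b0 in simp)
    have n: "cmod (Phi_adj \<beta> f x) = sqrt (2/pi) * (1/2) * cmod (D x)"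
      unfolding e norm_mult by (simp add: norm_divide)
    have s2: "(sqrt (2/pi))\<^sup>2 = 2/pi" by simp
    show ?thesis unfolding c2_def n power_mult_distrib s2 by (simp add: field_simps power2_eq_square)
  qed
  have fm: "f \<in> borel_measurable lebesgue"
    unfolding f_def by (rule meas_leb) measurable
  have fz: "\<forall>k. k \<notin> {0..b} \<longrightarrow> f k = 0" unfolding f_def by simp
  have ff: "L2_sq {0..} f < \<infinity>"
  proof -
    have "L2_sq {0..} f \<le> (\<integral>\<^sup>+x. ennreal (bb\<^sup>2) * indicator {0..b} x \<partial>lebesgue)"
      unfolding L2_sq_def
    proof (rule nn_integral_mono)
      fix x
      show "ennreal ((cmod (f x))\<^sup>2) * indicator {0..} x \<le> ennreal (bb\<^sup>2) * indicator {0..b} x"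
      proof (cases "x \<in> {0..b}")
        case True
        have "cmod (of_real \<beta> + \<i> * of_real x) \<le> bb"
          unfolding bb_def using True by (intro coef_bound) auto
        then have "cmod (f x) \<le> bb" using True unfolding f_def by (simp add: norm_mult)
        then have "(cmod (f x))\<^sup>2 \<le> bb\<^sup>2" by (intro power_mono) auto
        then show ?thesis using True by (auto simp: indicator_def intro: ennreal_leI)
      next
        case False
        then have "f x = 0" unfolding f_def by simp
        then show ?thesis by simp
      qed
    qed
    also have "\<dots> = ennreal (bb\<^sup>2) * emeasure lebesgue {0..b}"
      by (rule nn_integral_cmult_indicator) simp
    also have "\<dots> < \<infinity>" using b0 by (simp add: ennreal_mult_less_top)
    finally show ?thesis .
  qed
  have main: "L2_sq {0..} (Phi_adj \<beta> f) \<le> ennreal (C\<^sup>2) * L2_sq \<Omega> (Phi_adj \<beta> f)"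
    using hC fm ff fz by blast
  have P1: "cmod (D x) \<le> 2 * M" for x
  proof -
    have "cmod (D x) \<le> cmod (J b \<beta> (-\<i>) (x0 - x)) + cmod (J b \<beta> \<i> (x + x0))"
      unfolding D_def by (rule norm_triangle_ineq4)
    also have "\<dots> \<le> M + M" unfolding M_def bb_def
      using b0 by (intro add_mono J_bound) auto
    finally show ?thesis by simp
  qed
  have P2: "(cmod (D x))\<^sup>2 \<le> 4 * K\<^sup>2 / (x - x0)\<^sup>2" if x: "x \<ge> 0" "\<bar>x - x0\<bar> \<ge> R" for x
  proof -
    have t1: "\<bar>x0 - x\<bar> \<ge> 1" using x R1 by simp
    have t2: "\<bar>x + x0\<bar> \<ge> \<bar>x - x0\<bar>" using x x0R R0 by simp
    have t3: "\<bar>x - x0\<bar> > 0" using x R0 by simp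
    have a1: "cmod (J b \<beta> (-\<i>) (x0 - x)) \<le> K / \<bar>x - x0\<bar>"
      unfolding K_def using J_decay[of b "-\<i>" "x0 - x" \<beta>] b0 t1 by (simp add: abs_minus_commute)
    have a2: "cmod (J b \<beta> \<i> (x + x0)) \<le> K / \<bar>x + x0\<bar>"
      unfolding K_def using J_decay[of b "\<i>" "x + x0" \<beta>] b0 t1 t2 by simp
    also have "\<dots> \<le> K / \<bar>x - x0\<bar>" using K2 t2 t3 by (intro divide_left_mono) auto
    finally have a2': "cmod (J b \<beta> \<i> (x + x0)) \<le> K / \<bar>x - x0\<bar>" .
    have "cmod (D x) \<le> cmod (J b \<beta> (-\<i>) (x0 - x)) + cmod (J b \<beta> \<i> (x + x0))"
      unfolding D_def by (rule norm_triangle_ineq4)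
    also have "\<dots> \<le> 2 * K / \<bar>x - x0\<bar>" using a1 a2' by simp
    finally have "cmod (D x) \<le> 2 * K / \<bar>x - x0\<bar>" .
    then have "(cmod (D x))\<^sup>2 \<le> (2 * K / \<bar>x - x0\<bar>)\<^sup>2" by (intro power_mono) auto
    also have "\<dots> = 4 * K\<^sup>2 / (x - x0)\<^sup>2" by (simp add: power_divide power_mult_distrib)
    finally show ?thesis .
  qed
  have P3: "cmod (D x) \<ge> b\<^sup>2 / 8" if x: "\<bar>x - x0\<bar> \<le> \<delta>" for x
  proof -
    have "cmod (J b \<beta> (-\<i>) 0) \<ge> b\<^sup>2 / 2"
    proof -
      have "\<bar>Im (J b \<beta> (-\<i>) 0)\<bar> \<le> cmod (J b \<beta> (-\<i>) 0)" by (rule abs_Im_le_cmod)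
      moreover have "Im (J b \<beta> (-\<i>) 0) = - (b\<^sup>2 / 2)" using b0 by (simp add: J_zero)
      ultimately show ?thesis by simp
    qed
    moreover have "cmod (J b \<beta> (-\<i>) (x0 - x) - J b \<beta> (-\<i>) 0) \<le> b\<^sup>2 / 4"
    proof -
      have "cmod (J b \<beta> (-\<i>) (x0 - x) - J b \<beta> (-\<i>) 0) \<le> (b * \<bar>x0 - x\<bar> * (\<bar>\<beta>\<bar> + b)) * b"
        using b0 by (intro J_lip) auto
      also have "\<dots> = b * b * (\<bar>x0 - x\<bar> * bb)" unfolding bb_def by (simp add: mult_ac)
      also have "\<dots> \<le> b * b * (\<delta> * bb)"
        using x bb0 b0 by (intro mult_left_mono mult_right_mono) (auto simp: abs_minus_commute)
      also have "\<dots> \<le> b * b * (1/4)" using dbb b0 by (intro mult_left_mono) auto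
      finally show ?thesis by (simp add: power2_eq_square)
    qed
    ultimately have j1: "cmod (J b \<beta> (-\<i>) (x0 - x)) \<ge> b\<^sup>2 / 4"
      using norm_triangle_ineq2[of "J b \<beta> (-\<i>) 0" "J b \<beta> (-\<i>) (x0 - x)"]
      by (simp add: norm_minus_commute)
    have xx: "x + x0 \<ge> R" using x x0R d1 R1 by simp
    have "cmod (J b \<beta> \<i> (x + x0)) \<le> K / \<bar>x + x0\<bar>"
      unfolding K_def using J_decay[of b "\<i>" "x + x0" \<beta>] b0 xx R1 by simp
    also have "\<dots> \<le> K / R" using xx R0 K2 by (intro divide_left_mono) auto
    also have "\<dots> \<le> b\<^sup>2 / 8"
    proof -
      have "8 * K \<le> R * b\<^sup>2" using RK b0 by (simp add: divide_le_eq mult.commute)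
      then show ?thesis using R0 b0 by (simp add: divide_le_eq field_simps)
    qed
    finally have j2: "cmod (J b \<beta> \<i> (x + x0)) \<le> b\<^sup>2 / 8" .
    have "cmod (D x) \<ge> cmod (J b \<beta> (-\<i>) (x0 - x)) - cmod (J b \<beta> \<i> (x + x0))"
      unfolding D_def by (rule norm_triangle_ineq2)
    then show ?thesis using j1 j2 by simp
  qed
  have lower: "ennreal (c2 * \<Lambda>) \<le> L2_sq {0..} (Phi_adj \<beta> f)"
  proof -
    have "ennreal (c2 * \<Lambda>) = ennreal (c2 * (b\<^sup>2 / 8)\<^sup>2) * emeasure lebesgue {x0 - \<delta>..x0 + \<delta>}"
      using d0 c20 unfolding \<Lambda>_def by (simp add: ennreal_mult'[symmetric] mult_ac)
    also have "\<dots> = (\<integral>\<^sup>+x. ennreal (c2 * (b\<^sup>2 / 8)\<^sup>2) * indicator {x0 - \<delta>..x0 + \<delta>} x \<partial>lebesgue)"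
      by (rule nn_integral_cmult_indicator[symmetric]) simp
    also have "\<dots> \<le> L2_sq {0..} (Phi_adj \<beta> f)"
      unfolding L2_sq_def
    proof (rule nn_integral_mono)
      fix x
      show "ennreal (c2 * (b\<^sup>2 / 8)\<^sup>2) * indicator {x0 - \<delta>..x0 + \<delta>} x \<le> ennreal ((cmod (Phi_adj \<beta> f x))\<^sup>2) * indicator {0..} x"
      proof (cases "x \<in> {x0 - \<delta>..x0 + \<delta>}")
        case True
        then have "\<bar>x - x0\<bar> \<le> \<delta>" by auto
        then have "b\<^sup>2 / 8 \<le> cmod (D x)" by (rule P3)
        then have "(b\<^sup>2 / 8)\<^sup>2 \<le> (cmod (D x))\<^sup>2" by (intro power_mono) auto
        then have "c2 * (b\<^sup>2 / 8)\<^sup>2 \<le> (cmod (Phi_adj \<beta> f x))\<^sup>2" unfolding Phi using c20 by simp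
        moreover have "x \<ge> 0" using True d1 R1 x0R by auto
        ultimately show ?thesis using True by (auto simp: indicator_def intro: ennreal_leI)
      next
        case False
        then show ?thesis by simp
      qed
    qed
    finally show ?thesis .
  qed
  define S where "S = \<Omega> \<inter> {x1..x1 + 2 * R}"
  define A where "A = c2 * (4 * K\<^sup>2)"
  have A0: "A \<ge> 0" unfolding A_def using c20 by simp
  have I_sets: "{x1..x1 + 2 * R} \<in> sets lebesgue"
    by (metis fmeasurableD lmeasurable_cbox cbox_interval)
  have S_sets: "S \<in> sets lebesgue" unfolding S_def using assms(2) I_sets by (rule sets.Int)
  have S_fin: "emeasure lebesgue S \<noteq> \<infinity>"
  proof -
    have "emeasure lebesgue S \<le> emeasure lebesgue {x1..x1 + 2 * R}"
      unfolding S_def by (rule emeasure_mono) auto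
    also have "\<dots> < \<infinity>" using R0 by simp
    finally show ?thesis by simp
  qed
  have upper: "L2_sq \<Omega> (Phi_adj \<beta> f) \<le> ennreal (c2 * (2 * M)\<^sup>2 * measure lebesgue S + 2 * (A / R))"
  proof -
    have "L2_sq \<Omega> (Phi_adj \<beta> f) \<le> (\<integral>\<^sup>+x. ennreal (c2 * (2 * M)\<^sup>2) * indicator S x
        + (ennreal (A / (x - x0)\<^sup>2) * indicator {x0+R..} x + ennreal (A / (x - x0)\<^sup>2) * indicator {0..x0-R} x) \<partial>lebesgue)"
      unfolding L2_sq_def
    proof (rule nn_integral_mono)
      fix x
      show "ennreal ((cmod (Phi_adj \<beta> f x))\<^sup>2) * indicator \<Omega> x \<le> ennreal (c2 * (2 * M)\<^sup>2) * indicator S x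
        + (ennreal (A / (x - x0)\<^sup>2) * indicator {x0+R..} x + ennreal (A / (x - x0)\<^sup>2) * indicator {0..x0-R} x)"
      proof (cases "x \<in> \<Omega>")
        case False then show ?thesis by simp
      next
        case True
        then have x0': "x \<ge> 0" using assms(3) by auto
        show ?thesis
        proof (cases "\<bar>x - x0\<bar> \<le> R")
          case True
          then have "x \<in> S" unfolding S_def x0_def using \<open>x \<in> \<Omega>\<close> by auto
          have "(cmod (D x))\<^sup>2 \<le> (2 * M)\<^sup>2" using P1 by (intro power_mono) auto
          then have "(cmod (Phi_adj \<beta> f x))\<^sup>2 \<le> c2 * (2 * M)\<^sup>2" unfolding Phi using c20 by simp
          then have e1: "ennreal ((cmod (Phi_adj \<beta> f x))\<^sup>2) * indicator \<Omega> x \<le> ennreal (c2 * (2 * M)\<^sup>2) * indicator S x"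
            using \<open>x \<in> S\<close> \<open>x \<in> \<Omega>\<close> by (simp add: ennreal_leI)
          show ?thesis by (rule order_trans[OF e1 add_increasing2]) auto
        next
          case False
          then have "(cmod (D x))\<^sup>2 \<le> 4 * K\<^sup>2 / (x - x0)\<^sup>2" using P2 x0' by simp
          then have "c2 * (cmod (D x))\<^sup>2 \<le> c2 * (4 * K\<^sup>2 / (x - x0)\<^sup>2)"
            using c20 by (intro mult_left_mono) auto
          then have "(cmod (Phi_adj \<beta> f x))\<^sup>2 \<le> A / (x - x0)\<^sup>2" unfolding Phi A_def
            by (simp add: times_divide_eq_right)
          then have e: "ennreal ((cmod (Phi_adj \<beta> f x))\<^sup>2) * indicator \<Omega> x \<le> ennreal (A / (x - x0)\<^sup>2)"
            using \<open>x \<in> \<Omega>\<close> by (simp add: ennreal_leI)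
          from False have "x \<in> {x0+R..} \<or> x \<in> {0..x0-R}" using x0' by auto
          then show ?thesis
          proof
            assume "x \<in> {x0+R..}"
            then show ?thesis using e by (simp add: add_increasing2 add_increasing)
          next
            assume "x \<in> {0..x0-R}"
            then show ?thesis using e by (simp add: add_increasing2 add_increasing)
          qed
        qed
      qed
    qed
    also have "\<dots> = (\<integral>\<^sup>+x. ennreal (c2 * (2 * M)\<^sup>2) * indicator S x \<partial>lebesgue)
        + ((\<integral>\<^sup>+x. ennreal (A / (x - x0)\<^sup>2) * indicator {x0+R..} x \<partial>lebesgue)
         + (\<integral>\<^sup>+x. ennreal (A / (x - x0)\<^sup>2) * indicator {0..x0-R} x \<partial>lebesgue))"
    proof -
      have m1: "(\<lambda>x. ennreal (c2 * (2 * M)\<^sup>2) * indicator S x) \<in> borel_measurable lebesgue"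
        using S_sets by measurable
      have m2: "(\<lambda>x. ennreal (A / (x - x0)\<^sup>2) * indicator {x0+R..} x) \<in> borel_measurable lebesgue"
        by (rule meas_leb) measurable
      have m3: "(\<lambda>x. ennreal (A / (x - x0)\<^sup>2) * indicator {0..x0-R} x) \<in> borel_measurable lebesgue"
        by (rule meas_leb) measurable
      show ?thesis
        by (subst nn_integral_add[OF m1]) (use m2 m3 in measurable, subst nn_integral_add[OF m2 m3], rule refl)
    qed
    also have "\<dots> \<le> ennreal (c2 * (2 * M)\<^sup>2) * emeasure lebesgue S + (ennreal (A / R) + ennreal (A / R))"
      using S_sets tail_right[OF A0 R0, of x0] tail_left[OF A0 R0 x0R]
      by (intro add_mono) (auto simp: nn_integral_cmult_indicator)
    also have "\<dots> = ennreal (c2 * (2 * M)\<^sup>2 * measure lebesgue S + 2 * (A / R))"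
      using S_fin c20 A0 R0
      by (simp add: emeasure_eq_ennreal_measure ennreal_mult'[symmetric] ennreal_plus[symmetric] del: ennreal_plus)
    finally show ?thesis .
  qed
  define U where "U = c2 * (2 * M)\<^sup>2 * measure lebesgue S + 2 * (A / R)"
  have U0: "U \<ge> 0" unfolding U_def using c20 A0 R0 by simp
  have "ennreal (c2 * \<Lambda>) \<le> ennreal (C\<^sup>2) * ennreal U"
    using lower main upper unfolding U_def
    by (meson order_trans mult_left_mono zero_le)
  also have "\<dots> = ennreal (C\<^sup>2 * U)" using U0 by (simp add: ennreal_mult')
  finally have le: "c2 * \<Lambda> \<le> C\<^sup>2 * U" using U0 by (simp add: ennreal_le_iff)
  have mS: "measure lebesgue S \<le> \<gamma> * (2 * R)" using x1 unfolding S_def by simp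
  have t1: "C\<^sup>2 * (c2 * (2 * M)\<^sup>2 * measure lebesgue S) \<le> c2 * (\<Lambda> / 4)"
  proof -
    have "C\<^sup>2 * (c2 * (2 * M)\<^sup>2 * measure lebesgue S) \<le> C\<^sup>2 * (c2 * (2 * M)\<^sup>2 * (\<gamma> * (2 * R)))"
      using mS c20 by (intro mult_left_mono) auto
    also have "\<dots> = c2 * (Q * \<gamma>)" unfolding Q_def by (simp add: power2_eq_square mult_ac)
    also have "\<dots> \<le> c2 * (\<Lambda> / 4)"
    proof (rule mult_left_mono)
      have "Q * \<gamma> = \<Lambda> / 4 * (Q / (Q + 1))" unfolding \<gamma>_def
        using Q0 by (simp add: field_simps)
      also have "\<dots> \<le> \<Lambda> / 4 * 1"
        using Q0 L0 by (intro mult_left_mono) auto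
      finally show "Q * \<gamma> \<le> \<Lambda> / 4" by simp
    qed (use c20 in simp)
    finally show ?thesis .
  qed
  have t2: "C\<^sup>2 * (2 * (A / R)) \<le> c2 * (\<Lambda> / 4)"
  proof -
    have "32 * C\<^sup>2 * K\<^sup>2 \<le> R * \<Lambda>" using RL L0 by (simp add: divide_le_eq)
    then have "C\<^sup>2 * (8 * K\<^sup>2) \<le> R * (\<Lambda> / 4)" by simp
    then have "C\<^sup>2 * (8 * K\<^sup>2) / R \<le> \<Lambda> / 4" using R0 by (simp add: divide_le_eq mult.commute)
    then have h: "c2 * (C\<^sup>2 * (8 * K\<^sup>2) / R) \<le> c2 * (\<Lambda> / 4)" using c20 by (intro mult_left_mono) auto
    have eqA: "C\<^sup>2 * (2 * (A / R)) = c2 * (C\<^sup>2 * (8 * K\<^sup>2) / R)" unfolding A_def by (simp add: field_simps)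
    show ?thesis unfolding eqA by (rule h)
  qed
  have "C\<^sup>2 * U \<le> c2 * (\<Lambda> / 2)" using t1 t2 unfolding U_def by (simp add: distrib_left)
  with le have "c2 * \<Lambda> \<le> c2 * (\<Lambda> / 2)" by (rule order_trans)
  then show False using c20 L0 by simp
qed


end
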